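(* Let $P$ be an irreducible transition matrix on the finite set $S$, reversible with respect to $\pi$, and suppose $\mathrm{trace}(P)$ (equivalently, the sum of the eigenvalues of $P$) equals $\max\big(0,(2\pi_{\max}-1)/\pi_{\max}\big)$, where $\pi_{\max}=\max_x\pi(x)$. Then no other transition matrix that is reversible with respect to $\pi$ efficiency-dominates $P$.
   Context: $S$ is a finite set, and $\pi$ is a probability distribution on $S$ with $\pi(x)>0$ for all $x$. A transition matrix $P$ is reversible with respect to $\pi$ if $\pi(x)P(x,y)=\pi(y)P(y,x)$ for all $x,y$; irreducible if every state can be reached from every other with positive probability in some number of steps. For a Markov chain $X_1,X_2,\dots$ with transition matrix $P$ and $X_1\sim\pi$, $v(f,P)=\lim_{N\to\infty}\frac1N\mathrm{Var}\big(\sum_{i=1}^N f(X_i)\big)$. $P$ efficiency-dominates $Q$ if $v(f,P)\le v(f,Q)$ for all $f:S\to\mathbb R$. *)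

theory Defs
  imports "HOL-Analysis.Analysis"
begin

definition prob_dist :: "('a::finite \<Rightarrow> real) \<Rightarrow> bool" where
  "prob_dist \<mu> \<longleftrightarrow> (\<forall>x. \<mu> x \<ge> 0) \<and> (\<Sum>x\<in>UNIV. \<mu> x) = 1"

definition transition_matrix :: "('a::finite \<Rightarrow> 'a \<Rightarrow> real) \<Rightarrow> bool" where
  "transition_matrix P \<longleftrightarrow> (\<forall>x y. P x y \<ge> 0) \<and> (\<forall>x. (\<Sum>y\<in>UNIV. P x y) = 1)"

definition reversible :: "('a::finite \<Rightarrow> real) \<Rightarrow> ('a \<Rightarrow> 'a \<Rightarrow> real) \<Rightarrow> bool" where
  "reversible \<mu> P \<longleftrightarrow> (\<forall>x y. \<mu> x * P x y = \<mu> y * P y x)"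

fun mpow :: "('a::finite \<Rightarrow> 'a \<Rightarrow> real) \<Rightarrow> nat \<Rightarrow> 'a \<Rightarrow> 'a \<Rightarrow> real" where
  "mpow P 0 x y = (if x = y then 1 else 0)"
| "mpow P (Suc n) x y = (\<Sum>z\<in>UNIV. mpow P n x z * P z y)"

definition irreducible_tm :: "('a::finite \<Rightarrow> 'a \<Rightarrow> real) \<Rightarrow> bool" where
  "irreducible_tm P \<longleftrightarrow> (\<forall>x y. \<exists>n. mpow P n x y > 0)"

definition trace_tm :: "('a::finite \<Rightarrow> 'a \<Rightarrow> real) \<Rightarrow> real" where
  "trace_tm P = (\<Sum>x\<in>UNIV. P x x)"

fun chain_prob :: "('a \<Rightarrow> 'a \<Rightarrow> real) \<Rightarrow> 'a \<Rightarrow> 'a list \<Rightarrow> real" where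
  "chain_prob P x [] = 1"
| "chain_prob P x (y # ys) = P x y * chain_prob P y ys"

fun path_prob :: "('a \<Rightarrow> real) \<Rightarrow> ('a \<Rightarrow> 'a \<Rightarrow> real) \<Rightarrow> 'a list \<Rightarrow> real" where
  "path_prob \<mu> P [] = 1"
| "path_prob \<mu> P (x # xs) = \<mu> x * chain_prob P x xs"

definition path_exp :: "nat \<Rightarrow> ('a::finite \<Rightarrow> real) \<Rightarrow> ('a \<Rightarrow> 'a \<Rightarrow> real) \<Rightarrow> ('a list \<Rightarrow> real) \<Rightarrow> real" where
  "path_exp N \<mu> P g = (\<Sum>xs\<in>{xs. length xs = N}. path_prob \<mu> P xs * g xs)"

definition sum_var :: "nat \<Rightarrow> ('a::finite \<Rightarrow> real) \<Rightarrow> ('a \<Rightarrow> 'a \<Rightarrow> real) \<Rightarrow> ('a \<Rightarrow> real) \<Rightarrow> real" where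
  "sum_var N \<mu> P f =
     path_exp N \<mu> P (\<lambda>xs. (sum_list (map f xs))\<^sup>2) - (path_exp N \<mu> P (\<lambda>xs. sum_list (map f xs)))\<^sup>2"

text \<open>Asymptotic variance v(f,P) = lim_{N\<rightarrow>\<infinity>} Var(...)/N, taken in the extended reals
  (it may be +\<infinity>, e.g. for reducible chains).\<close>
definition asym_var :: "('a::finite \<Rightarrow> real) \<Rightarrow> ('a \<Rightarrow> real) \<Rightarrow> ('a \<Rightarrow> 'a \<Rightarrow> real) \<Rightarrow> ereal" where
  "asym_var \<mu> f P = lim (\<lambda>N. ereal (sum_var N \<mu> P f / real N))"

definition eff_dominates :: "('a::finite \<Rightarrow> real) \<Rightarrow> ('a \<Rightarrow> 'a \<Rightarrow> real) \<Rightarrow> ('a \<Rightarrow> 'a \<Rightarrow> real) \<Rightarrow> bool" where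
  "eff_dominates \<mu> P Q \<longleftrightarrow> (\<forall>f. asym_var \<mu> f P \<le> asym_var \<mu> f Q)"

end

theory Submission
  imports Defs
begin

definition ip :: "('a::finite \<Rightarrow> real) \<Rightarrow> ('a \<Rightarrow> real) \<Rightarrow> ('a \<Rightarrow> real) \<Rightarrow> real" where
  "ip \<mu> u v = (\<Sum>x\<in>UNIV. \<mu> x * u x * v x)"

definition app :: "('a::finite \<Rightarrow> 'a \<Rightarrow> real) \<Rightarrow> ('a \<Rightarrow> real) \<Rightarrow> 'a \<Rightarrow> real" where
  "app K u x = (\<Sum>y\<in>UNIV. K x y * u y)"

definition CE :: "nat \<Rightarrow> ('a::finite \<Rightarrow> 'a \<Rightarrow> real) \<Rightarrow> 'a \<Rightarrow> ('a list \<Rightarrow> real) \<Rightarrow> real" where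
  "CE N K x F = (\<Sum>xs\<in>{xs. length xs = N}. chain_prob K x xs * F xs)"

definition good :: "('a::finite \<Rightarrow> real) \<Rightarrow> ('a \<Rightarrow> 'a \<Rightarrow> real) \<Rightarrow> bool" where
  "good \<mu> K \<longleftrightarrow> prob_dist \<mu> \<and> transition_matrix K \<and> reversible \<mu> K"

lemma finite_len: "finite {xs::'a::finite list. length xs = n}"
  using finite_lists_length_eq[of "UNIV::'a set" n] by simp

lemma lists_Suc: "{xs::'a list. length xs = Suc n} = (\<lambda>(y,ys). y#ys) ` (UNIV \<times> {ys. length ys = n})"
  by (auto simp: length_Suc_conv image_iff)

lemma sum_lists_Suc:
  "(\<Sum>xs\<in>{xs::'a::finite list. length xs = Suc n}. F xs) = (\<Sum>y\<in>UNIV. \<Sum>ys\<in>{ys. length ys = n}. F (y#ys))"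
proof -
  have inj: "inj_on (\<lambda>(y,ys). y#ys) (UNIV \<times> {ys::'a list. length ys = n})" by (auto simp: inj_on_def)
  show ?thesis unfolding lists_Suc sum.reindex[OF inj] by (simp add: sum.cartesian_product split_def)
qed

lemma lists_0: "{xs::'a list. length xs = 0} = {[]}" by auto

lemma CE_0: "CE 0 K x F = F []"
  unfolding CE_def lists_0 by simp

lemma CE_Suc: "CE (Suc N) K x F = (\<Sum>y\<in>UNIV. K x y * CE N K y (\<lambda>ys. F (y#ys)))"
  unfolding CE_def sum_lists_Suc by (simp add: sum_distrib_left mult.assoc)

lemma pe_0: "path_exp 0 \<mu> K F = F []"
  unfolding path_exp_def lists_0 by simp

lemma pe_Suc: "path_exp (Suc N) \<mu> K F = (\<Sum>x\<in>UNIV. \<mu> x * CE N K x (\<lambda>ys. F (x#ys)))"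
  unfolding path_exp_def CE_def sum_lists_Suc by (simp add: sum_distrib_left mult.assoc)

lemma CE_add: "CE N K x (\<lambda>xs. F xs + G xs) = CE N K x F + CE N K x G"
  unfolding CE_def by (simp add: sum.distrib algebra_simps)

lemma CE_cmult: "CE N K x (\<lambda>xs. c * F xs) = c * CE N K x F"
  unfolding CE_def by (simp add: sum_distrib_left algebra_simps)

lemma CE_one: "transition_matrix K \<Longrightarrow> CE N K x (\<lambda>_. 1) = 1"
proof (induction N arbitrary: x)
  case 0 then show ?case by (simp add: CE_0)
next
  case (Suc N) then show ?case by (simp add: CE_Suc transition_matrix_def)
qed

lemma CE_const: "transition_matrix K \<Longrightarrow> CE N K x (\<lambda>_. c) = c"
  using CE_cmult[of N K x c "\<lambda>_. 1"] CE_one[of K N x] by simp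

lemma stat: "good \<mu> K \<Longrightarrow> (\<Sum>x\<in>UNIV. \<mu> x * K x y) = \<mu> y"
proof -
  assume g: "good \<mu> K"
  have "(\<Sum>x\<in>UNIV. \<mu> x * K x y) = (\<Sum>x\<in>UNIV. \<mu> y * K y x)"
    using g by (simp add: good_def reversible_def)
  also have "\<dots> = \<mu> y" using g by (simp add: good_def transition_matrix_def sum_distrib_left[symmetric])
  finally show ?thesis .
qed

lemma ip_app_1: "good \<mu> K \<Longrightarrow> (\<Sum>x\<in>UNIV. \<mu> x * app K u x) = (\<Sum>x\<in>UNIV. \<mu> x * u x)"
proof -
  assume g: "good \<mu> K"
  have "(\<Sum>x\<in>UNIV. \<mu> x * app K u x) = (\<Sum>y\<in>UNIV. (\<Sum>x\<in>UNIV. \<mu> x * K x y) * u y)"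
    unfolding app_def by (simp add: sum_distrib_left sum_distrib_right mult.assoc) (subst sum.swap, simp add: algebra_simps)
  also have "\<dots> = (\<Sum>x\<in>UNIV. \<mu> x * u x)" using stat[OF g] by simp
  finally show ?thesis .
qed

lemma selfadj: "good \<mu> K \<Longrightarrow> ip \<mu> (app K u) v = ip \<mu> u (app K v)"
proof -
  assume g: "good \<mu> K"
  have r: "\<mu> x * K x y = \<mu> y * K y x" for x y using g by (simp add: good_def reversible_def)
  have "ip \<mu> (app K u) v = (\<Sum>x\<in>UNIV. \<Sum>y\<in>UNIV. (\<mu> x * K x y) * u y * v x)"
    unfolding ip_def app_def by (simp add: sum_distrib_left sum_distrib_right algebra_simps)
  also have "\<dots> = (\<Sum>x\<in>UNIV. \<Sum>y\<in>UNIV. (\<mu> y * K y x) * u y * v x)" by (simp add: r)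
  also have "\<dots> = ip \<mu> u (app K v)"
    unfolding ip_def app_def by (subst sum.swap) (simp add: sum_distrib_left sum_distrib_right algebra_simps)
  finally show ?thesis .
qed

lemma app_diff: "app K (\<lambda>y. u y - v y) x = app K u x - app K v x"
  unfolding app_def by (simp add: sum_subtractf right_diff_distrib)
lemma app_add: "app K (\<lambda>y. u y + v y) x = app K u x + app K v x"
  unfolding app_def by (simp add: sum.distrib distrib_left)
lemma app_cmult: "app K (\<lambda>y. c * u y) x = c * app K u x"
  unfolding app_def by (simp add: sum_distrib_left algebra_simps)
lemma app_const: "transition_matrix K \<Longrightarrow> app K (\<lambda>_. c) x = c"
  unfolding app_def transition_matrix_def by (simp add: sum_distrib_right[symmetric])

lemma ip_app_le: "good \<mu> K \<Longrightarrow> ip \<mu> u (app K u) \<le> ip \<mu> u u"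
proof -
  assume g: "good \<mu> K"
  have nn: "\<mu> x * K x y \<ge> 0" for x y using g by (simp add: good_def prob_dist_def transition_matrix_def)
  have "ip \<mu> u (app K u) = (\<Sum>x\<in>UNIV. \<Sum>y\<in>UNIV. (\<mu> x * K x y) * (u x * u y))"
    unfolding ip_def app_def by (simp add: sum_distrib_left algebra_simps)
  also have "\<dots> \<le> (\<Sum>x\<in>UNIV. \<Sum>y\<in>UNIV. (\<mu> x * K x y) * ((u x)\<^sup>2 / 2 + (u y)\<^sup>2 / 2))"
  proof (intro sum_mono mult_left_mono[OF _ nn])
    fix x y show "u x * u y \<le> (u x)\<^sup>2 / 2 + (u y)\<^sup>2 / 2"
      using sum_squares_bound[of "u x" "u y"] by (simp add: power2_eq_square field_simps)
  qed
  also have "\<dots> = (\<Sum>x\<in>UNIV. \<Sum>y\<in>UNIV. \<mu> x * (u x)\<^sup>2 / 2 * K x y) + (\<Sum>x\<in>UNIV. \<Sum>y\<in>UNIV. \<mu> x * K x y * ((u y)\<^sup>2 / 2))"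
    by (simp add: sum.distrib[symmetric] algebra_simps)
  also have "(\<Sum>x\<in>UNIV. \<Sum>y\<in>UNIV. \<mu> x * (u x)\<^sup>2 / 2 * K x y) = (\<Sum>x\<in>UNIV. \<mu> x * (u x)\<^sup>2 / 2)"
  proof (rule sum.cong[OF refl])
    fix x
    have "(\<Sum>y\<in>UNIV. \<mu> x * (u x)\<^sup>2 / 2 * K x y) = \<mu> x * (u x)\<^sup>2 / 2 * (\<Sum>y\<in>UNIV. K x y)"
      by (rule sum_distrib_left[symmetric])
    then show "(\<Sum>y\<in>UNIV. \<mu> x * (u x)\<^sup>2 / 2 * K x y) = \<mu> x * (u x)\<^sup>2 / 2"
      using g by (simp add: good_def transition_matrix_def)
  qed
  also have "(\<Sum>x\<in>UNIV. \<Sum>y\<in>UNIV. \<mu> x * K x y * ((u y)\<^sup>2 / 2)) = (\<Sum>y\<in>UNIV. (\<Sum>x\<in>UNIV. \<mu> x * K x y) * ((u y)\<^sup>2 / 2))"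
    by (subst sum.swap) (simp add: sum_distrib_right sum_divide_distrib)
  also have "\<dots> = (\<Sum>y\<in>UNIV. \<mu> y * ((u y)\<^sup>2 / 2))" using stat[OF g] by simp
  also have "(\<Sum>x\<in>UNIV. \<mu> x * (u x)\<^sup>2 / 2) + (\<Sum>y\<in>UNIV. \<mu> y * ((u y)\<^sup>2 / 2)) = ip \<mu> u u"
    by (simp add: ip_def sum.distrib[symmetric] power2_eq_square algebra_simps)
  finally show ?thesis .
qed

definition m1 where "m1 N K f x = CE N K x (\<lambda>xs. sum_list (map f xs))"
definition m2 where "m2 N K f x = CE N K x (\<lambda>xs. (sum_list (map f xs))\<^sup>2)"

lemma m1_0: "m1 0 K f x = 0" by (simp add: m1_def CE_0)
lemma m2_0: "m2 0 K f x = 0" by (simp add: m2_def CE_0)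

lemma m1_Suc: "transition_matrix K \<Longrightarrow> m1 (Suc N) K f x = app K (\<lambda>y. f y + m1 N K f y) x"
proof -
  assume t: "transition_matrix K"
  have "CE N K y (\<lambda>ys. f y + sum_list (map f ys)) = f y + m1 N K f y" for y
    using CE_add[of N K y "\<lambda>_. f y" "\<lambda>ys. sum_list (map f ys)"] CE_const[OF t] by (simp add: m1_def)
  then show ?thesis by (simp add: m1_def CE_Suc app_def)
qed

lemma m2_Suc: "transition_matrix K \<Longrightarrow>
   m2 (Suc N) K f x = app K (\<lambda>y. (f y)\<^sup>2 + 2 * f y * m1 N K f y + m2 N K f y) x"
proof -
  assume t: "transition_matrix K"
  have "CE N K y (\<lambda>ys. (f y + sum_list (map f ys))\<^sup>2) = (f y)\<^sup>2 + 2 * f y * m1 N K f y + m2 N K f y" for y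
  proof -
    have e: "(\<lambda>ys. (f y + sum_list (map f ys))\<^sup>2) = (\<lambda>ys. ((f y)\<^sup>2 + (2 * f y) * sum_list (map f ys)) + (sum_list (map f ys))\<^sup>2)"
      by (simp add: power2_eq_square algebra_simps)
    show ?thesis unfolding e CE_add CE_cmult CE_const[OF t] by (simp add: m1_def m2_def)
  qed
  then show ?thesis by (simp add: m2_def CE_Suc app_def)
qed

lemma pe_S_Suc: "transition_matrix K \<Longrightarrow>
  path_exp (Suc N) \<mu> K (\<lambda>xs. sum_list (map f xs)) = (\<Sum>x\<in>UNIV. \<mu> x * (f x + m1 N K f x))"
proof -
  assume t: "transition_matrix K"
  have "CE N K y (\<lambda>ys. f y + sum_list (map f ys)) = f y + m1 N K f y" for y
    using CE_add[of N K y "\<lambda>_. f y" "\<lambda>ys. sum_list (map f ys)"] CE_const[OF t] by (simp add: m1_def)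
  then show ?thesis by (simp add: pe_Suc)
qed

lemma pe_S2_Suc: "transition_matrix K \<Longrightarrow>
  path_exp (Suc N) \<mu> K (\<lambda>xs. (sum_list (map f xs))\<^sup>2) = (\<Sum>x\<in>UNIV. \<mu> x * ((f x)\<^sup>2 + 2 * f x * m1 N K f x + m2 N K f x))"
proof -
  assume t: "transition_matrix K"
  have "CE N K y (\<lambda>ys. (f y + sum_list (map f ys))\<^sup>2) = (f y)\<^sup>2 + 2 * f y * m1 N K f y + m2 N K f y" for y
  proof -
    have e: "(\<lambda>ys. (f y + sum_list (map f ys))\<^sup>2) = (\<lambda>ys. ((f y)\<^sup>2 + (2 * f y) * sum_list (map f ys)) + (sum_list (map f ys))\<^sup>2)"
      by (simp add: power2_eq_square algebra_simps)
    show ?thesis unfolding e CE_add CE_cmult CE_const[OF t] by (simp add: m1_def m2_def)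
  qed
  then show ?thesis by (simp add: pe_Suc)
qed

lemma good_tm: "good \<mu> K \<Longrightarrow> transition_matrix K" by (simp add: good_def)

lemma pe_S2_eq: "good \<mu> K \<Longrightarrow> path_exp N \<mu> K (\<lambda>xs. (sum_list (map f xs))\<^sup>2) = (\<Sum>x\<in>UNIV. \<mu> x * m2 N K f x)"
proof (induction N)
  case 0 then show ?case by (simp add: pe_0 m2_0)
next
  case (Suc N)
  have "(\<Sum>x\<in>UNIV. \<mu> x * m2 (Suc N) K f x) = (\<Sum>x\<in>UNIV. \<mu> x * ((f x)\<^sup>2 + 2 * f x * m1 N K f x + m2 N K f x))"
    using ip_app_1[OF Suc.prems] by (simp add: m2_Suc[OF good_tm[OF Suc.prems]])
  then show ?case by (simp add: pe_S2_Suc[OF good_tm[OF Suc.prems]])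
qed

lemma pe_S2_rec: "good \<mu> K \<Longrightarrow> path_exp (Suc N) \<mu> K (\<lambda>xs. (sum_list (map f xs))\<^sup>2) =
   path_exp N \<mu> K (\<lambda>xs. (sum_list (map f xs))\<^sup>2) + ip \<mu> f f + 2 * ip \<mu> f (m1 N K f)"
proof -
  assume g: "good \<mu> K"
  show ?thesis
    unfolding pe_S2_Suc[OF good_tm[OF g]] pe_S2_eq[OF g, of N] ip_def
    by (simp add: sum.distrib sum_distrib_left power2_eq_square algebra_simps)
qed

lemma m1_mean: "good \<mu> K \<Longrightarrow> (\<Sum>x\<in>UNIV. \<mu> x * f x) = 0 \<Longrightarrow> (\<Sum>x\<in>UNIV. \<mu> x * m1 N K f x) = 0"
proof (induction N)
  case 0 then show ?case by (simp add: m1_0)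
next
  case (Suc N)
  have "(\<Sum>x\<in>UNIV. \<mu> x * m1 (Suc N) K f x) = (\<Sum>x\<in>UNIV. \<mu> x * (f x + m1 N K f x))"
    using ip_app_1[OF Suc.prems(1)] by (simp add: m1_Suc[OF good_tm[OF Suc.prems(1)]])
  also have "\<dots> = 0" using Suc by (simp add: distrib_left sum.distrib)
  finally show ?case .
qed

lemma pe_S_zero: "good \<mu> K \<Longrightarrow> (\<Sum>x\<in>UNIV. \<mu> x * f x) = 0 \<Longrightarrow> path_exp N \<mu> K (\<lambda>xs. sum_list (map f xs)) = 0"
proof (cases N)
  case 0 then show ?thesis by (simp add: pe_0)
next
  case (Suc M)
  assume a: "good \<mu> K" "(\<Sum>x\<in>UNIV. \<mu> x * f x) = 0"
  then show ?thesis using m1_mean[OF a, of M] unfolding Suc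
    by (simp add: pe_S_Suc[OF good_tm[OF a(1)]] distrib_left sum.distrib)
qed

lemma sum_var_eq: "good \<mu> K \<Longrightarrow> (\<Sum>x\<in>UNIV. \<mu> x * f x) = 0 \<Longrightarrow>
   sum_var N \<mu> K f = path_exp N \<mu> K (\<lambda>xs. (sum_list (map f xs))\<^sup>2)"
  by (simp add: sum_var_def pe_S_zero)

lemma m1_poisson: "good \<mu> K \<Longrightarrow> (\<forall>x. f x = h x - app K h x) \<Longrightarrow> m1 N K f x = app K h x - (app K ^^ Suc N) h x"
proof (induction N arbitrary: x)
  case 0 then show ?case by (simp add: m1_0)
next
  case (Suc N)
  have e: "(\<lambda>y. f y + m1 N K f y) = (\<lambda>y. h y - (app K ^^ Suc N) h y)"
  proof (rule ext)
    fix y show "f y + m1 N K f y = h y - (app K ^^ Suc N) h y"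
      using Suc.IH[OF Suc.prems, of y] Suc.prems(2)[rule_format, of y] by simp
  qed
  have "m1 (Suc N) K f x = app K (\<lambda>y. h y - (app K ^^ Suc N) h y) x"
    unfolding m1_Suc[OF good_tm[OF Suc.prems(1)]] e ..
  also have "\<dots> = app K h x - (app K ^^ Suc (Suc N)) h x" by (simp add: app_diff)
  finally show ?case .
qed

lemma pe_poisson:
  assumes g: "good \<mu> K" and f: "\<forall>x. f x = h x - app K h x"
  shows "path_exp N \<mu> K (\<lambda>xs. (sum_list (map f xs))\<^sup>2) =
     real N * (ip \<mu> h h - ip \<mu> (app K h) (app K h)) + 2 * (ip \<mu> h ((app K ^^ Suc N) h) - ip \<mu> h ((app K ^^ 1) h))"
proof (induction N)
  case 0 then show ?case by (simp add: pe_0)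
next
  case (Suc N)
  define u where "u = (app K ^^ Suc N) h"
  define v where "v = (\<lambda>x. app K h x - u x)"
  have m: "m1 N K f = v" unfolding v_def u_def using m1_poisson[OF g f] by auto
  have e2: "ip \<mu> h ((app K ^^ Suc (Suc N)) h) = ip \<mu> (app K h) u"
    using selfadj[OF g, of h u] by (simp add: u_def)
  have pw: "\<mu> x * f x * f x + 2 * (\<mu> x * f x * v x) =
      \<mu> x * h x * h x - \<mu> x * app K h x * app K h x - 2 * (\<mu> x * h x * u x) + 2 * (\<mu> x * app K h x * u x)" for x
  proof -
    have fx: "f x = h x - app K h x" using f by simp
    show ?thesis unfolding fx v_def by (simp add: algebra_simps)
  qed
  have "ip \<mu> f f + 2 * ip \<mu> f v = (\<Sum>x\<in>UNIV. \<mu> x * f x * f x + 2 * (\<mu> x * f x * v x))"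
    by (simp add: ip_def sum.distrib sum_distrib_left)
  also have "\<dots> = (\<Sum>x\<in>UNIV. \<mu> x * h x * h x - \<mu> x * app K h x * app K h x - 2 * (\<mu> x * h x * u x) + 2 * (\<mu> x * app K h x * u x))"
    using pw by simp
  also have "\<dots> = ip \<mu> h h - ip \<mu> (app K h) (app K h) - 2 * ip \<mu> h u + 2 * ip \<mu> (app K h) u"
    by (simp add: ip_def sum.distrib sum_subtractf sum_distrib_left)
  finally have key: "ip \<mu> f f + 2 * ip \<mu> f v = ip \<mu> h h - ip \<mu> (app K h) (app K h) - 2 * ip \<mu> h u + 2 * ip \<mu> (app K h) u" .
  show ?case unfolding pe_S2_rec[OF g] Suc m using key e2 by (simp add: u_def algebra_simps)
qed

lemma app_bound: "transition_matrix K \<Longrightarrow> (\<forall>y. \<bar>u y\<bar> \<le> B) \<Longrightarrow> \<bar>app K u x\<bar> \<le> B"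
proof -
  assume t: "transition_matrix K" and b: "\<forall>y. \<bar>u y\<bar> \<le> B"
  have "\<bar>app K u x\<bar> \<le> (\<Sum>y\<in>UNIV. \<bar>K x y * u y\<bar>)" unfolding app_def by (rule sum_abs)
  also have "\<dots> \<le> (\<Sum>y\<in>UNIV. K x y * B)"
    using t b by (intro sum_mono) (simp add: transition_matrix_def abs_mult mult_left_mono)
  also have "\<dots> = B" using t by (simp add: transition_matrix_def sum_distrib_right[symmetric])
  finally show ?thesis .
qed

lemma pow_bound: "transition_matrix K \<Longrightarrow> \<bar>(app K ^^ n) h x\<bar> \<le> (\<Sum>y\<in>UNIV. \<bar>h y\<bar>)"
proof (induction n arbitrary: x)
  case 0
  have "\<bar>h x\<bar> \<le> (\<Sum>y\<in>UNIV. \<bar>h y\<bar>)" by (rule member_le_sum) auto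
  then show ?case by simp
next
  case (Suc n) then show ?case using app_bound[OF Suc.prems] by simp
qed

lemma e_bound: "good \<mu> K \<Longrightarrow> \<bar>ip \<mu> h ((app K ^^ n) h)\<bar> \<le> (\<Sum>x\<in>UNIV. \<mu> x * \<bar>h x\<bar> * (\<Sum>y\<in>UNIV. \<bar>h y\<bar>))"
proof -
  assume g: "good \<mu> K"
  have mu: "\<mu> x \<ge> 0" for x using g by (simp add: good_def prob_dist_def)
  have "\<bar>ip \<mu> h ((app K ^^ n) h)\<bar> \<le> (\<Sum>x\<in>UNIV. \<bar>\<mu> x * h x * (app K ^^ n) h x\<bar>)" unfolding ip_def by (rule sum_abs)
  also have "\<dots> \<le> (\<Sum>x\<in>UNIV. \<mu> x * \<bar>h x\<bar> * (\<Sum>y\<in>UNIV. \<bar>h y\<bar>))"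
  proof (rule sum_mono)
    fix x
    have "\<bar>\<mu> x * h x * (app K ^^ n) h x\<bar> = (\<mu> x * \<bar>h x\<bar>) * \<bar>(app K ^^ n) h x\<bar>" using mu by (simp add: abs_mult)
    also have "\<dots> \<le> (\<mu> x * \<bar>h x\<bar>) * (\<Sum>y\<in>UNIV. \<bar>h y\<bar>)"
      by (rule mult_left_mono[OF pow_bound[OF good_tm[OF g]]]) (simp add: mu)
    finally show "\<bar>\<mu> x * h x * (app K ^^ n) h x\<bar> \<le> \<mu> x * \<bar>h x\<bar> * (\<Sum>y\<in>UNIV. \<bar>h y\<bar>)" .
  qed
  finally show ?thesis .
qed

lemma asym_poisson:
  assumes g: "good \<mu> K" and f: "\<forall>x. f x = h x - app K h x"
  shows "asym_var \<mu> f K = ereal (ip \<mu> h h - ip \<mu> (app K h) (app K h))"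
proof -
  define a where "a = ip \<mu> h h - ip \<mu> (app K h) (app K h)"
  define e where "e = (\<lambda>n. ip \<mu> h ((app K ^^ n) h))"
  define C where "C = (\<Sum>x\<in>UNIV. \<mu> x * \<bar>h x\<bar> * (\<Sum>y\<in>UNIV. \<bar>h y\<bar>))"
  have eb: "\<bar>e n\<bar> \<le> C" for n unfolding e_def C_def by (rule e_bound[OF g])
  have mean: "(\<Sum>x\<in>UNIV. \<mu> x * f x) = 0"
    using f ip_app_1[OF g, of h] by (simp add: right_diff_distrib sum_subtractf)
  have sv: "sum_var N \<mu> K f = real N * a + 2 * (e (Suc N) - e 1)" for N
    unfolding sum_var_eq[OF g mean] pe_poisson[OF g f] a_def e_def by simp
  define r where "r = (\<lambda>N. 2 * (e (Suc N) - e 1) / real N)"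
  have "r \<longlonglongrightarrow> 0"
  proof (rule Lim_null_comparison)
    show "\<forall>\<^sub>F N in sequentially. norm (r N) \<le> 4 * C / real N"
    proof (rule always_eventually, rule allI)
      fix N
      have "\<bar>2 * (e (Suc N) - e 1)\<bar> \<le> 4 * C" using eb[of "Suc N"] eb[of 1] by (simp add: abs_le_iff)
      then show "norm (r N) \<le> 4 * C / real N" unfolding r_def
        by (simp add: abs_divide divide_right_mono)
    qed
    show "(\<lambda>N. 4 * C / real N) \<longlonglongrightarrow> 0" by (rule lim_const_over_n)
  qed
  then have "(\<lambda>N. a + r N) \<longlonglongrightarrow> a + 0" by (intro tendsto_add tendsto_const)
  then have lim1: "(\<lambda>N. a + r N) \<longlonglongrightarrow> a" by simp
  have "\<forall>\<^sub>F N in sequentially. a + r N = sum_var N \<mu> K f / real N"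
    unfolding eventually_sequentially
    by (rule exI[of _ 1]) (auto simp: sv r_def field_simps)
  from Lim_transform_eventually[OF lim1 this]
  have "(\<lambda>N. sum_var N \<mu> K f / real N) \<longlonglongrightarrow> a" .
  then have "(\<lambda>N. ereal (sum_var N \<mu> K f / real N)) \<longlonglongrightarrow> ereal a" by (rule tendsto_ereal)
  then show ?thesis unfolding asym_var_def a_def by (rule limI)
qed

lemma asym_inf:
  assumes g: "good \<mu> K" and fix_: "\<forall>x. app K f x = f x" and mean: "(\<Sum>x\<in>UNIV. \<mu> x * f x) = 0"
    and pos: "ip \<mu> f f > 0"
  shows "asym_var \<mu> f K = \<infinity>"
proof -
  have m: "m1 N K f x = real N * f x" for N x
  proof (induction N arbitrary: x)
    case 0 then show ?case by (simp add: m1_0)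
  next
    case (Suc N)
    have "m1 (Suc N) K f x = app K (\<lambda>y. (real N + 1) * f y) x"
      using Suc by (simp add: m1_Suc[OF good_tm[OF g]] algebra_simps)
    also have "\<dots> = (real N + 1) * f x" by (simp add: app_cmult fix_)
    finally show ?case by simp
  qed
  have V: "path_exp N \<mu> K (\<lambda>xs. (sum_list (map f xs))\<^sup>2) = (real N)\<^sup>2 * ip \<mu> f f" for N
  proof (induction N)
    case 0 then show ?case by (simp add: pe_0)
  next
    case (Suc N)
    have "ip \<mu> f (m1 N K f) = real N * ip \<mu> f f"
      by (simp add: m ip_def sum_distrib_left algebra_simps)
    then show ?case unfolding pe_S2_rec[OF g] Suc by (simp add: power2_eq_square algebra_simps)
  qed
  have sv: "sum_var N \<mu> K f / real N = real N * ip \<mu> f f" for N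
    unfolding sum_var_eq[OF g mean] V by (cases "N = 0") (simp_all add: power2_eq_square)
  have "(\<lambda>N. ereal (sum_var N \<mu> K f / real N)) \<longlonglongrightarrow> \<infinity>"
    unfolding Lim_PInfty sv
  proof
    fix B
    obtain N :: nat where N: "B / ip \<mu> f f \<le> real N" using real_arch_simple by blast
    show "\<exists>N. \<forall>n\<ge>N. ereal B \<le> ereal (real n * ip \<mu> f f)"
    proof (intro exI allI impI)
      fix n assume "N \<le> n"
      then have "B / ip \<mu> f f \<le> real n" using N by linarith
      then show "ereal B \<le> ereal (real n * ip \<mu> f f)" using pos by (simp add: field_simps)
    qed
  qed
  then show ?thesis unfolding asym_var_def by (rule limI)
qed

lemma ip_sym: "ip \<mu> u v = ip \<mu> v u" by (simp add: ip_def algebra_simps)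

definition kerprop :: "('a::finite \<Rightarrow> 'a \<Rightarrow> real) \<Rightarrow> bool" where
  "kerprop K \<longleftrightarrow> (\<forall>h. (\<forall>x. app K h x = h x) \<longrightarrow> (\<forall>x y. h x = h y))"

lemma solv:
  assumes g: "good \<mu> K" and ker: "kerprop K" and mean: "(\<Sum>x\<in>UNIV. \<mu> x * f x) = 0"
  shows "\<exists>h. \<forall>x. f x = h x - app K h x"
proof -
  define T :: "real^'a \<Rightarrow> real^'a" where
    "T v = (\<chi> x. vec_nth v x - app K (vec_nth v) x + (\<Sum>y\<in>UNIV. \<mu> y * vec_nth v y))" for v
  have sm: "(\<Sum>x\<in>UNIV. \<mu> x) = 1" using g by (simp add: good_def prob_dist_def)
  have lin: "linear T"
    by (rule linearI) (simp_all add: T_def vec_eq_iff app_def sum.distrib sum_distrib_left algebra_simps)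
  have key: "(\<Sum>x\<in>UNIV. \<mu> x * (h x - app K h x + m)) = m" for h m
  proof -
    have "(\<Sum>x\<in>UNIV. \<mu> x * (h x - app K h x + m)) = (\<Sum>x\<in>UNIV. \<mu> x * h x) - (\<Sum>x\<in>UNIV. \<mu> x * app K h x) + m * (\<Sum>x\<in>UNIV. \<mu> x)"
      by (simp add: algebra_simps sum.distrib sum_subtractf sum_distrib_left)
    then show ?thesis using ip_app_1[OF g, of h] sm by simp
  qed
  have "inj T" unfolding linear_injective_0[OF lin]
  proof (intro allI impI)
    fix v :: "real^'a" assume T0: "T v = 0"
    define h where "h = vec_nth v"
    define m where "m = (\<Sum>y\<in>UNIV. \<mu> y * h y)"
    have hx: "h x - app K h x + m = 0" for x using T0 unfolding T_def vec_eq_iff h_def m_def by simp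
    have "m = 0" using key[of h m] hx by simp
    then have fixh: "\<forall>x. app K h x = h x" using hx by (simp add: algebra_simps)
    then have c: "\<forall>x y. h x = h y" using ker unfolding kerprop_def by blast
    obtain x0 :: 'a where True by blast
    have "m = (\<Sum>y\<in>UNIV. \<mu> y * h x0)" unfolding m_def using c by metis
    also have "\<dots> = h x0" using sm by (simp add: sum_distrib_right[symmetric])
    finally have "h x0 = 0" using \<open>m = 0\<close> by simp
    then have "\<forall>x. h x = 0" using c by metis
    then show "v = 0" unfolding h_def by (simp add: vec_eq_iff)
  qed
  from linear_inj_imp_surj[OF lin this] obtain v where Tv: "T v = (\<chi> x. f x)" by (metis surjD)
  define h where "h = vec_nth v"
  define m where "m = (\<Sum>y\<in>UNIV. \<mu> y * h y)"
  have fx: "f x = h x - app K h x + m" for x using Tv unfolding T_def vec_eq_iff h_def m_def by simp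
  have "m = 0" using key[of h m] mean fx by simp
  then show ?thesis using fx by auto
qed

lemma mpow_nonneg: "transition_matrix K \<Longrightarrow> mpow K n x y \<ge> 0"
proof (induction n arbitrary: y)
  case 0 then show ?case by simp
next
  case (Suc n) then show ?case by (auto intro!: sum_nonneg simp: transition_matrix_def)
qed

lemma ker_irred:
  assumes t: "transition_matrix K" and irr: "irreducible_tm K"
  shows "kerprop K"
  unfolding kerprop_def
proof (rule allI, rule impI)
  fix h :: "'a \<Rightarrow> real" assume fixh: "\<forall>x. app K h x = h x"
  define M where "M = Max (range h)"
  have "M \<in> range h" unfolding M_def by (rule Max_in) auto
  then obtain x0 where x0: "h x0 = M" by auto
  have le: "h y \<le> M" for y unfolding M_def by (rule Max_ge) auto
  have Kn: "K x y \<ge> 0" for x y using t by (simp add: transition_matrix_def)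
  have claim: "mpow K n x0 y > 0 \<Longrightarrow> h y = M" for n y
  proof (induction n arbitrary: y)
    case 0 then show ?case using x0 by (simp split: if_splits)
  next
    case (Suc n)
    have "\<exists>z. mpow K n x0 z * K z y > 0"
    proof (rule ccontr)
      assume "\<not> ?thesis"
      then have "(\<Sum>z\<in>UNIV. mpow K n x0 z * K z y) \<le> 0" by (intro sum_nonpos) (simp add: not_less)
      then show False using Suc.prems by simp
    qed
    then obtain z where z: "mpow K n x0 z * K z y > 0" by blast
    have mz: "mpow K n x0 z > 0" and kz: "K z y > 0"
      using z mpow_nonneg[OF t, of n x0 z] Kn[of z y] by (auto simp: zero_less_mult_iff)
    have hz: "h z = M" using Suc.IH[OF mz] .
    have "(\<Sum>w\<in>UNIV. K z w * (M - h w)) = M - app K h z"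
      using t by (simp add: app_def right_diff_distrib sum_subtractf transition_matrix_def sum_distrib_right[symmetric])
    also have "\<dots> = 0" using fixh hz by simp
    finally have "(\<Sum>w\<in>UNIV. K z w * (M - h w)) = 0" .
    moreover have "\<forall>w\<in>UNIV. 0 \<le> K z w * (M - h w)" using Kn le by simp
    ultimately have "K z y * (M - h y) = 0" by (simp add: sum_nonneg_eq_0_iff)
    then show ?case using kz by simp
  qed
  have all: "h y = M" for y
  proof -
    obtain n where "mpow K n x0 y > 0" using irr unfolding irreducible_tm_def by blast
    then show ?thesis by (rule claim)
  qed
  show "\<forall>x y. h x = h y" using all by simp
qed

lemma ker_from_dom:
  assumes gP: "good \<mu> P" and kP: "kerprop P" and gQ: "good \<mu> Q" and pos: "\<forall>x. \<mu> x > 0"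
    and dom: "eff_dominates \<mu> Q P"
  shows "kerprop Q"
  unfolding kerprop_def
proof (rule allI, rule impI)
  fix h :: "'a \<Rightarrow> real" assume fixh: "\<forall>x. app Q h x = h x"
  define c where "c = (\<Sum>x\<in>UNIV. \<mu> x * h x)"
  define f where "f = (\<lambda>x. h x - c)"
  have sm: "(\<Sum>x\<in>UNIV. \<mu> x) = 1" using gP by (simp add: good_def prob_dist_def)
  have fixf: "\<forall>x. app Q f x = f x"
    unfolding f_def using fixh app_const[OF good_tm[OF gQ]] by (simp add: app_diff)
  have mean: "(\<Sum>x\<in>UNIV. \<mu> x * f x) = 0"
    unfolding f_def using sm by (simp add: right_diff_distrib sum_subtractf c_def sum_distrib_right[symmetric])
  have "\<not> ip \<mu> f f > 0"
  proof
    assume p: "ip \<mu> f f > 0"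
    have inf: "asym_var \<mu> f Q = \<infinity>" by (rule asym_inf[OF gQ fixf mean p])
    obtain g where gg: "\<forall>x. f x = g x - app P g x" using solv[OF gP kP mean] by blast
    have "asym_var \<mu> f P = ereal (ip \<mu> g g - ip \<mu> (app P g) (app P g))" by (rule asym_poisson[OF gP gg])
    moreover have "asym_var \<mu> f Q \<le> asym_var \<mu> f P" using dom unfolding eff_dominates_def by blast
    ultimately show False using inf by simp
  qed
  then have "(\<Sum>x\<in>UNIV. \<mu> x * f x * f x) \<le> 0" by (simp add: ip_def)
  moreover have "\<forall>x\<in>UNIV. 0 \<le> \<mu> x * f x * f x" using pos by (simp add: less_imp_le mult.assoc)
  ultimately have "\<forall>x\<in>UNIV. \<mu> x * f x * f x = 0" using sum_nonneg_eq_0_iff[of UNIV "\<lambda>x. \<mu> x * f x * f x"]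
    by (simp add: sum_nonneg antisym)
  then have "f x = 0" for x
  proof -
    assume z: "\<forall>x\<in>UNIV. \<mu> x * f x * f x = 0"
    have "\<mu> x * f x * f x = 0" using z by simp
    then show "f x = 0" using pos[rule_format, of x] by simp
  qed
  then show "\<forall>x y. h x = h y" unfolding f_def by simp
qed

lemma qf_le:
  assumes gP: "good \<mu> P" and kP: "kerprop P" and gQ: "good \<mu> Q" and kQ: "kerprop Q"
    and dom: "eff_dominates \<mu> Q P"
  shows "ip \<mu> b (app Q b) \<le> ip \<mu> b (app P b)"
proof -
  define f where "f = (\<lambda>x. b x - app P b x)"
  have mean: "(\<Sum>x\<in>UNIV. \<mu> x * f x) = 0"
    unfolding f_def using ip_app_1[OF gP, of b] by (simp add: right_diff_distrib sum_subtractf)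
  obtain a where fa: "\<forall>x. f x = a x - app Q a x" using solv[OF gQ kQ mean] by blast
  have fb: "\<forall>x. f x = b x - app P b x" by (simp add: f_def)
  have "asym_var \<mu> f Q \<le> asym_var \<mu> f P" using dom unfolding eff_dominates_def by blast
  then have D: "ip \<mu> a a - ip \<mu> (app Q a) (app Q a) \<le> ip \<mu> b b - ip \<mu> (app P b) (app P b)"
    unfolding asym_poisson[OF gQ fa] asym_poisson[OF gP fb] by simp
  define c where "c = app Q a"
  define d where "d = app Q b"
  define p where "p = app P b"
  have F: "p x = b x - a x + c x" for x using fa[rule_format, of x] fb[rule_format, of x] unfolding c_def p_def by linarith
  have A: "ip \<mu> (\<lambda>x. a x - b x) (app Q (\<lambda>x. a x - b x)) \<le> ip \<mu> (\<lambda>x. a x - b x) (\<lambda>x. a x - b x)"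
    by (rule ip_app_le[OF gQ])
  have A': "ip \<mu> (\<lambda>x. a x - b x) (\<lambda>x. c x - d x) \<le> ip \<mu> (\<lambda>x. a x - b x) (\<lambda>x. a x - b x)"
  proof -
    have "app Q (\<lambda>x. a x - b x) = (\<lambda>x. app Q a x - app Q b x)" by (rule ext) (rule app_diff)
    then show ?thesis using A unfolding c_def d_def by simp
  qed
  have S: "ip \<mu> a d = ip \<mu> c b" unfolding c_def d_def using selfadj[OF gQ, of a b] by (simp add: ip_sym)
  define aa where "aa = ip \<mu> a a"
  define ab where "ab = ip \<mu> a b"
  define ac where "ac = ip \<mu> a c"
  define ad where "ad = ip \<mu> a d"
  define bb where "bb = ip \<mu> b b"
  define bc where "bc = ip \<mu> b c"
  define bd where "bd = ip \<mu> b d"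
  define cc where "cc = ip \<mu> c c"
  define cb where "cb = ip \<mu> c b"
  have cbbc: "cb = bc" unfolding cb_def bc_def by (rule ip_sym)
  have e1: "ip \<mu> p p = bb + aa + cc - 2*ab + 2*bc - 2*ac"
  proof -
    have "ip \<mu> p p = (\<Sum>x\<in>UNIV. \<mu> x * b x * b x + \<mu> x * a x * a x + \<mu> x * c x * c x - 2*(\<mu> x * a x * b x) + 2*(\<mu> x * b x * c x) - 2*(\<mu> x * a x * c x))"
      unfolding ip_def by (rule sum.cong) (simp_all add: F algebra_simps)
    then show ?thesis unfolding aa_def ab_def ac_def bb_def bc_def cc_def ip_def
      by (simp add: sum.distrib sum_subtractf sum_distrib_left)
  qed
  have e2: "ip \<mu> (\<lambda>x. a x - b x) (\<lambda>x. c x - d x) = ac - ad - bc + bd"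
  proof -
    have "ip \<mu> (\<lambda>x. a x - b x) (\<lambda>x. c x - d x) = (\<Sum>x\<in>UNIV. \<mu> x * a x * c x - \<mu> x * a x * d x - \<mu> x * b x * c x + \<mu> x * b x * d x)"
      unfolding ip_def by (rule sum.cong) (simp_all add: algebra_simps)
    then show ?thesis unfolding ac_def ad_def bc_def bd_def ip_def
      by (simp add: sum.distrib sum_subtractf sum_distrib_left)
  qed
  have e3: "ip \<mu> (\<lambda>x. a x - b x) (\<lambda>x. a x - b x) = aa - 2*ab + bb"
  proof -
    have "ip \<mu> (\<lambda>x. a x - b x) (\<lambda>x. a x - b x) = (\<Sum>x\<in>UNIV. \<mu> x * a x * a x - 2*(\<mu> x * a x * b x) + \<mu> x * b x * b x)"
      unfolding ip_def by (rule sum.cong) (simp_all add: algebra_simps)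
    then show ?thesis unfolding aa_def ab_def bb_def ip_def
      by (simp add: sum.distrib sum_subtractf sum_distrib_left)
  qed
  have e4: "ip \<mu> b p = bb - ab + bc"
  proof -
    have "ip \<mu> b p = (\<Sum>x\<in>UNIV. \<mu> x * b x * b x - \<mu> x * a x * b x + \<mu> x * b x * c x)"
      unfolding ip_def by (rule sum.cong) (simp_all add: F algebra_simps)
    then show ?thesis unfolding ab_def bb_def bc_def ip_def
      by (simp add: sum.distrib sum_subtractf sum_distrib_left)
  qed
  have D': "aa - cc \<le> bb - ip \<mu> p p" using D unfolding aa_def cc_def bb_def c_def p_def .
  have "bd \<le> bb - ab + bc" using D' A' S e1 e2 e3 cbbc unfolding ad_def[symmetric] cb_def[symmetric] by linarith
  then show ?thesis using e4 unfolding bd_def d_def p_def by simp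
qed

lemma sum_ind: fixes F :: "'a::finite \<Rightarrow> real" shows "(\<Sum>y\<in>(UNIV::'a::finite set). F y * (if y = a then 1 else 0)) = F a"
proof -
  have "(\<Sum>y\<in>(UNIV::'a set). F y * (if y = a then 1 else 0)) = (\<Sum>y\<in>(UNIV::'a set). if y = a then F y else 0)"
    by (rule sum.cong) auto
  then show ?thesis by simp
qed

lemma app_pair: "app K (\<lambda>x. (if x = a then 1 else 0) + s * (if x = b then 1 else 0)) x = K x a + s * K x b"
proof -
  have "app K (\<lambda>x. (if x = a then 1 else 0) + s * (if x = b then 1 else 0)) x
      = app K (\<lambda>x. if x = a then 1 else 0) x + s * app K (\<lambda>x. if x = b then 1 else 0) x"
    by (simp add: app_add app_cmult)
  then show ?thesis by (simp add: app_def sum_ind)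
qed

lemma ip_pair: "ip \<mu> (\<lambda>x. (if x = a then 1 else 0) + s * (if x = b then 1 else 0)) w = \<mu> a * w a + s * (\<mu> b * w b)"
proof -
  have "ip \<mu> (\<lambda>x. (if x = a then 1 else 0) + s * (if x = b then 1 else 0)) w
     = (\<Sum>x\<in>UNIV. (\<mu> x * w x) * (if x = a then 1 else 0)) + s * (\<Sum>x\<in>UNIV. (\<mu> x * w x) * (if x = b then 1 else 0))"
    unfolding ip_def by (simp add: sum.distrib sum_distrib_left algebra_simps)
  then show ?thesis by (simp add: sum_ind)
qed

lemma qf_pair:
  "ip \<mu> (\<lambda>x. (if x = a then 1 else 0) + s * (if x = b then 1 else 0))
            (app K (\<lambda>x. (if x = a then 1 else 0) + s * (if x = b then 1 else 0)))
         = \<mu> a * K a a + s * (\<mu> a * K a b) + s * (\<mu> b * K b a) + s * s * (\<mu> b * K b b)"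
  unfolding app_pair[abs_def] ip_pair by (simp add: algebra_simps)

lemma qf_single:
  "ip \<mu> (\<lambda>x. if x = a then 1 else 0) (app K (\<lambda>x. if x = a then 1 else 0)) = \<mu> a * K a a"
  using qf_pair[of \<mu> a 0 a K] by simp

lemma trace_lb:
  assumes g: "good \<mu> Q" and pos: "\<forall>x. \<mu> x > 0"
  shows "trace_tm Q \<ge> max 0 ((2 * Max (range \<mu>) - 1) / Max (range \<mu>))"
proof -
  define M where "M = Max (range \<mu>)"
  have "M \<in> range \<mu>" unfolding M_def by (rule Max_in) auto
  then obtain m where m: "\<mu> m = M" by auto
  have Mpos: "M > 0" using pos m by metis
  have tm: "\<forall>x y. Q x y \<ge> 0" "\<forall>x. (\<Sum>y\<in>UNIV. Q x y) = 1" using g by (auto simp: good_def transition_matrix_def)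
  have rev: "\<mu> x * Q x y = \<mu> y * Q y x" for x y using g by (simp add: good_def reversible_def)
  have sm: "(\<Sum>x\<in>UNIV. \<mu> x) = 1" using g by (simp add: good_def prob_dist_def)
  have t0: "trace_tm Q \<ge> 0" unfolding trace_tm_def using tm by (simp add: sum_nonneg)
  have t1: "trace_tm Q \<ge> Q m m" unfolding trace_tm_def by (rule member_le_sum) (use tm in auto)
  have le1: "Q y m \<le> 1" for y
  proof -
    have "Q y m \<le> (\<Sum>w\<in>UNIV. Q y w)" by (rule member_le_sum) (use tm in auto)
    then show ?thesis using tm by simp
  qed
  have qb: "Q m y \<le> \<mu> y / M" for y
  proof -
    have "\<mu> m * Q m y = \<mu> y * Q y m" by (rule rev)
    also have "\<dots> \<le> \<mu> y" using le1[of y] pos by (simp add: less_imp_le mult_left_le)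
    finally show ?thesis using Mpos m by (simp add: field_simps mult.commute)
  qed
  have s1: "Q m m = 1 - (\<Sum>y\<in>UNIV - {m}. Q m y)"
    using tm(2) sum.remove[of UNIV m "Q m"] by simp
  have "(\<Sum>y\<in>UNIV - {m}. Q m y) \<le> (\<Sum>y\<in>UNIV - {m}. \<mu> y / M)" by (rule sum_mono) (rule qb)
  also have "\<dots> = (\<Sum>y\<in>UNIV - {m}. \<mu> y) / M" by (simp add: sum_divide_distrib)
  also have "(\<Sum>y\<in>UNIV - {m}. \<mu> y) = 1 - M" using sm sum.remove[of UNIV m \<mu>] m by simp
  finally have "(\<Sum>y\<in>UNIV - {m}. Q m y) \<le> (1 - M) / M" .
  then have "Q m m \<ge> 1 - (1 - M) / M" using s1 by simp
  also have "1 - (1 - M) / M = (2 * M - 1) / M" using Mpos by (simp add: field_simps)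
  finally have "Q m m \<ge> (2 * M - 1) / M" .
  then show ?thesis using t0 t1 unfolding M_def by simp
qed

theorem theorem8:
  fixes \<mu> :: "'a::finite \<Rightarrow> real" and P :: "'a \<Rightarrow> 'a \<Rightarrow> real"
  assumes "prob_dist \<mu>" and "\<forall>x. \<mu> x > 0"
    and "transition_matrix P" and "irreducible_tm P" and "reversible \<mu> P"
    and "trace_tm P = max 0 ((2 * Max (range \<mu>) - 1) / Max (range \<mu>))"
  shows "\<not> (\<exists>Q. transition_matrix Q \<and> reversible \<mu> Q \<and> Q \<noteq> P \<and> eff_dominates \<mu> Q P)"
proof
  assume "\<exists>Q. transition_matrix Q \<and> reversible \<mu> Q \<and> Q \<noteq> P \<and> eff_dominates \<mu> Q P"
  then obtain Q where tQ: "transition_matrix Q" and rQ: "reversible \<mu> Q" and ne: "Q \<noteq> P"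
    and dom: "eff_dominates \<mu> Q P" by blast
  have gP: "good \<mu> P" using assms by (simp add: good_def)
  have gQ: "good \<mu> Q" using assms tQ rQ by (simp add: good_def)
  have kP: "kerprop P" by (rule ker_irred) (use assms in auto)
  have kQ: "kerprop Q" by (rule ker_from_dom[OF gP kP gQ assms(2) dom])
  have qf: "ip \<mu> b (app Q b) \<le> ip \<mu> b (app P b)" for b by (rule qf_le[OF gP kP gQ kQ dom])
  have dle: "Q a a \<le> P a a" for a
    using qf[of "\<lambda>x. if x = a then 1 else 0"] assms(2) unfolding qf_single by simp
  have "trace_tm P \<le> trace_tm Q" using trace_lb[OF gQ assms(2)] assms(6) by simp
  then have "(\<Sum>a\<in>UNIV. P a a - Q a a) \<le> 0" unfolding trace_tm_def by (simp add: sum_subtractf)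
  moreover have "\<forall>a\<in>UNIV. 0 \<le> P a a - Q a a" using dle by simp
  ultimately have "\<forall>a\<in>UNIV. P a a - Q a a = 0"
    using sum_nonneg_eq_0_iff[of UNIV "\<lambda>a. P a a - Q a a"] by (simp add: sum_nonneg antisym)
  then have deq: "Q a a = P a a" for a by simp
  have "Q a b = P a b" for a b
  proof (cases "a = b")
    case True then show ?thesis using deq by simp
  next
    case False
    have i1: "\<mu> a * Q a a + 1 * (\<mu> a * Q a b) + 1 * (\<mu> b * Q b a) + 1 * 1 * (\<mu> b * Q b b)
        \<le> \<mu> a * P a a + 1 * (\<mu> a * P a b) + 1 * (\<mu> b * P b a) + 1 * 1 * (\<mu> b * P b b)"
      using qf[of "\<lambda>x. (if x = a then 1 else 0) + 1 * (if x = b then 1 else 0)"] unfolding qf_pair .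
    have i2: "\<mu> a * Q a a + (-1) * (\<mu> a * Q a b) + (-1) * (\<mu> b * Q b a) + (-1) * (-1) * (\<mu> b * Q b b)
        \<le> \<mu> a * P a a + (-1) * (\<mu> a * P a b) + (-1) * (\<mu> b * P b a) + (-1) * (-1) * (\<mu> b * P b b)"
      using qf[of "\<lambda>x. (if x = a then 1 else 0) + (-1) * (if x = b then 1 else 0)"] unfolding qf_pair .
    have rq: "\<mu> b * Q b a = \<mu> a * Q a b" using rQ by (simp add: reversible_def)
    have rp: "\<mu> b * P b a = \<mu> a * P a b" using assms(5) by (simp add: reversible_def)
    have "\<mu> a * Q a b = \<mu> a * P a b" using i1 i2 deq[of a] deq[of b] rq rp by (simp; auto)
    then show ?thesis using assms(2) by (metis mult_cancel_left less_irrefl)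
  qed
  then have "Q = P" by (intro ext)
  then show False using ne by simp
qed

end
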